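(* Let $D$ be a 2-connected rooted digraph with root $r$. Then there exists an $r-r$ numbering of $D$, that is, a linear ordering $\sigma$ of $V(D)\setminus\{r\}$ such that for every vertex $x\neq r$, either $x$ is an outneighbour of $r$, or there exist two in-neighbours $u$ and $v$ of $x$ with $\sigma(u)<\sigma(x)<\sigma(v)$.
   Context: A rooted digraph is a loopless digraph $D$ with a distinguished vertex $r$ (the root) such that: there is no arc $(u,r)$ for any $u\in V(D)$; there is no arc $(x,y)$ with $x\neq r$ and $y$ an outneighbour of $r$; and $r$ has outdegree at least 2. A cut of a rooted digraph $D$ is a set $S\subseteq V(D)\setminus\{r\}$ such that some vertex $z\notin S$ is not the endpoint of any directed path starting at $r$ in $D-S$. $D$ is 2-connected if it has no cut of size at most 1 (in particular, the empty set is not a cut, so every vertex is reachable from $r$). *)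

theory Defs
  imports Main
begin

definition out_nbrs :: "('a \<times> 'a) set \<Rightarrow> 'a \<Rightarrow> 'a set" where
  "out_nbrs A x = {y. (x, y) \<in> A}"

definition in_nbrs :: "('a \<times> 'a) set \<Rightarrow> 'a \<Rightarrow> 'a set" where
  "in_nbrs A x = {u. (u, x) \<in> A}"

definition rooted_digraph :: "'a set \<Rightarrow> ('a \<times> 'a) set \<Rightarrow> 'a \<Rightarrow> bool" where
  "rooted_digraph V A r \<longleftrightarrow>
     finite V \<and> A \<subseteq> V \<times> V \<and> r \<in> V \<and>
     (\<forall>x. (x, x) \<notin> A) \<and>
     (\<forall>u. (u, r) \<notin> A) \<and>
     (\<forall>x y. x \<noteq> r \<and> y \<in> out_nbrs A r \<longrightarrow> (x, y) \<notin> A) \<and>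
     card (out_nbrs A r) \<ge> 2"

definition is_cut :: "'a set \<Rightarrow> ('a \<times> 'a) set \<Rightarrow> 'a \<Rightarrow> 'a set \<Rightarrow> bool" where
  "is_cut V A r S \<longleftrightarrow> S \<subseteq> V - {r} \<and>
     (\<exists>z \<in> V - S. (r, z) \<notin> (A \<inter> ((V - S) \<times> (V - S)))\<^sup>*)"

definition two_connected :: "'a set \<Rightarrow> ('a \<times> 'a) set \<Rightarrow> 'a \<Rightarrow> bool" where
  "two_connected V A r \<longleftrightarrow> (\<forall>S. card S \<le> 1 \<and> finite S \<longrightarrow> \<not> is_cut V A r S)"

text \<open>An r-r numbering: a linear ordering of V - {r}, given as an injective map into nat.\<close>
definition rr_numbering :: "'a set \<Rightarrow> ('a \<times> 'a) set \<Rightarrow> 'a \<Rightarrow> ('a \<Rightarrow> nat) \<Rightarrow> bool" where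
  "rr_numbering V A r \<sigma> \<longleftrightarrow> inj_on \<sigma> (V - {r}) \<and>
     (\<forall>x \<in> V - {r}. x \<in> out_nbrs A r \<or>
        (\<exists>u \<in> V - {r}. \<exists>v \<in> V - {r}. u \<in> in_nbrs A x \<and> v \<in> in_nbrs A x \<and>
            \<sigma> u < \<sigma> x \<and> \<sigma> x < \<sigma> v))"

end

theory Submission
  imports Defs
begin

lemma rt_mem: "(x,w) \<in> (E \<inter> (W \<times> W))\<^sup>* \<Longrightarrow> x = w \<or> w \<in> W"
  by (induct rule: rtrancl_induct) auto

lemma rt_mono: "W \<subseteq> W' \<Longrightarrow> (x,z) \<in> (E \<inter> (W \<times> W))\<^sup>* \<Longrightarrow> (x,z) \<in> (E \<inter> (W' \<times> W'))\<^sup>*"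
  by (erule rtrancl_mono[THEN subsetD, rotated]) auto

lemma PL: "(x,z) \<in> (E \<inter> (W \<times> W))\<^sup>* \<Longrightarrow>
   (x,z) \<in> (E \<inter> ((W-{b}) \<times> (W-{b})))\<^sup>* \<or> (x,b) \<in> (E \<inter> (W \<times> W))\<^sup>*"
proof (induct rule: rtrancl_induct)
  case base then show ?case by simp
next
  case (step w z')
  show ?case
  proof (cases "z' = b \<or> w = b")
    case True
    then show ?thesis
    proof
      assume "z' = b" then show ?thesis using step(1,2) by (meson rtrancl.rtrancl_into_rtrancl)
    next
      assume "w = b" then show ?thesis using step(1) by simp
    qed
  next
    case False
    then have e: "(w,z') \<in> E \<inter> ((W-{b}) \<times> (W-{b}))" using step(2) by auto
    from step(3) show ?thesis
    proof
      assume "(x, w) \<in> (E \<inter> ((W-{b}) \<times> (W-{b})))\<^sup>*"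
      then show ?thesis using e by (meson rtrancl.rtrancl_into_rtrancl)
    next
      assume "(x, b) \<in> (E \<inter> (W \<times> W))\<^sup>*" then show ?thesis by simp
    qed
  qed
qed

lemma PL2: "(x,z) \<in> (E \<inter> (W \<times> W))\<^sup>* \<Longrightarrow> x \<noteq> b \<Longrightarrow>
   (x,z) \<in> (E \<inter> ((W-{b}) \<times> (W-{b})))\<^sup>* \<or> (\<exists>p. (x,p) \<in> (E \<inter> ((W-{b}) \<times> (W-{b})))\<^sup>* \<and> (p,b) \<in> E)"
proof (induct rule: rtrancl_induct)
  case base then show ?case by simp
next
  case (step w z')
  then consider "(x, w) \<in> (E \<inter> ((W-{b}) \<times> (W-{b})))\<^sup>*" | "\<exists>p. (x,p) \<in> (E \<inter> ((W-{b}) \<times> (W-{b})))\<^sup>* \<and> (p,b) \<in> E"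
    by blast
  then show ?case
  proof cases
    case 1
    then have "w \<noteq> b" using rt_mem[OF 1] step(4) by auto
    show ?thesis
    proof (cases "z' = b")
      case True then show ?thesis using 1 step(2) by blast
    next
      case False
      have "(w,z') \<in> E \<inter> ((W-{b}) \<times> (W-{b}))" using step(2) False \<open>w \<noteq> b\<close> by auto
      then show ?thesis using 1 by (meson rtrancl.rtrancl_into_rtrancl)
    qed
  next
    case 2 then show ?thesis by blast
  qed
qed

lemma LV: "(x,z) \<in> (E \<inter> (W \<times> W))\<^sup>* \<Longrightarrow>
   (x,z) \<in> (E \<inter> ((W-{b}) \<times> (W-{b})))\<^sup>* \<or> z = b \<or>
   (\<exists>y'. (b,y') \<in> E \<and> y' \<in> W-{b} \<and> (y',z) \<in> (E \<inter> ((W-{b}) \<times> (W-{b})))\<^sup>*)"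
proof (induct rule: rtrancl_induct)
  case base then show ?case by simp
next
  case (step w z')
  show ?case
  proof (cases "z' = b")
    case True then show ?thesis by simp
  next
    case zb: False
    show ?thesis
    proof (cases "w = b")
      case True then show ?thesis using step(2) zb by auto
    next
      case False
      have e: "(w,z') \<in> E \<inter> ((W-{b}) \<times> (W-{b}))" using step(2) False zb by auto
      from step(3) False show ?thesis
        using e by (meson rtrancl.rtrancl_into_rtrancl)
    qed
  qed
qed

lemma card_le1: "card (S::'a set) \<le> 1 \<Longrightarrow> finite S \<Longrightarrow> S = {} \<or> (\<exists>s. S = {s})"
proof -
  assume c: "card S \<le> 1" and f: "finite S"
  show ?thesis
  proof (cases "S = {}")
    case False
    then obtain s where s: "s \<in> S" by blast
    have "\<forall>a1\<in>S. \<forall>a2\<in>S. a1 = a2" using c f card_le_Suc0_iff_eq[OF f] by simp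
    then have "S = {s}" using s by blast
    then show ?thesis by blast
  qed simp
qed


theorem lemma1:
  assumes "rooted_digraph V A r" and "two_connected V A r"
  shows "\<exists>\<sigma>. rr_numbering V A r \<sigma>"
  using assms
proof (induction "card V" arbitrary: V A rule: less_induct)
  case less
  note rd = less.prems(1) and tc = less.prems(2)
  from rd have finV: "finite V" and AV: "A \<subseteq> V \<times> V" and rV: "r \<in> V"
    and noloop: "\<And>x. (x,x) \<notin> A" and noin: "\<And>u. (u,r) \<notin> A"
    and noR: "\<And>x y. x \<noteq> r \<Longrightarrow> y \<in> out_nbrs A r \<Longrightarrow> (x,y) \<notin> A"
    and cR: "card (out_nbrs A r) \<ge> 2"
    unfolding rooted_digraph_def by auto
  have reach: "(r,z) \<in> (A \<inter> ((V-S) \<times> (V-S)))\<^sup>*"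
    if "card S \<le> 1" "finite S" "S \<subseteq> V - {r}" "z \<in> V - S" for S z
    using tc that unfolding two_connected_def is_cut_def by blast
  have reach1: "(r,z) \<in> (A \<inter> ((V-{s}) \<times> (V-{s})))\<^sup>*"
    if "s \<in> V" "s \<noteq> r" "z \<in> V - {s}" for s z
    using reach[of "{s}" z] that by auto
  have reach0: "(r,z) \<in> (A \<inter> (V \<times> V))\<^sup>*" if "z \<in> V" for z
    using reach[of "{}" z] that by auto
  show ?case
  proof (cases "V - {r} \<subseteq> out_nbrs A r")
    case True
    obtain f :: "_ \<Rightarrow> nat" where "inj_on f V" using finite_imp_inj_to_nat_seg[OF finV] by blast
    then have "rr_numbering V A r f" using True unfolding rr_numbering_def
      by (auto intro: inj_on_subset)
    then show ?thesis by blast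
  next
    case False
    then obtain x where x: "x \<in> V" "x \<noteq> r" "x \<notin> out_nbrs A r" by blast
    have "\<exists>a y. a \<in> out_nbrs A r \<and> (a,y) \<in> A"
    proof -
      have "(r,x) \<in> (A \<inter> (V \<times> V))\<^sup>*" using reach0 x(1) .
      then obtain w where rw: "(r,w) \<in> A \<inter> (V \<times> V)" and wx: "(w,x) \<in> (A \<inter> (V \<times> V))\<^sup>*"
        using x(2) by (metis converse_rtranclE)
      have "w \<noteq> x" using rw x(3) unfolding out_nbrs_def by auto
      then obtain w' where "(w,w') \<in> A \<inter> (V \<times> V)" using wx by (metis converse_rtranclE)
      thus ?thesis using rw unfolding out_nbrs_def by auto
    qed
    then obtain a y0 where aR: "a \<in> out_nbrs A r" and ay0: "(a,y0) \<in> A" by blast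
    have aV: "a \<in> V" and ar: "a \<noteq> r" and ra: "(r,a) \<in> A"
      using aR AV noloop unfolding out_nbrs_def by auto
    define M where "M = (\<lambda>y. {z \<in> V. (r,z) \<notin> (A \<inter> ((V-{a,y}) \<times> (V-{a,y})))\<^sup>*})"
    obtain y where ay: "(a,y) \<in> A" and ymin: "\<And>y'. (a,y') \<in> A \<Longrightarrow> card (M y) \<le> card (M y')"
      using ex_has_least_nat[of "\<lambda>y. (a,y) \<in> A" y0 "\<lambda>y. card (M y)"] ay0 by blast
    have yV: "y \<in> V" and yr: "y \<noteq> r" and ya: "y \<noteq> a" and yR: "y \<notin> out_nbrs A r"
      using ay AV noloop noin noR[OF ar] by auto
    have C: "(r,z) \<in> (A \<inter> ((V-{a,y}) \<times> (V-{a,y})))\<^sup>*" if z: "z \<in> V - {a,y}" for z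
    proof (rule ccontr)
      assume nz: "\<not> ?thesis"
      have eq: "V-{y}-{a} = V-{a,y}" by auto
      have "(r,z) \<in> (A \<inter> ((V-{y}) \<times> (V-{y})))\<^sup>*" using reach1[of y z] yV yr z by auto
      from LV[OF this, of a] nz z eq obtain y' where ay': "(a,y') \<in> A" "y' \<in> V-{a,y}"
        and y'z: "(y',z) \<in> (A \<inter> ((V-{a,y}) \<times> (V-{a,y})))\<^sup>*" by auto
      have y'My: "y' \<in> M y"
      proof -
        have "(r,y') \<notin> (A \<inter> ((V-{a,y}) \<times> (V-{a,y})))\<^sup>*"
          using y'z nz by (meson rtrancl_trans)
        then show ?thesis using ay' unfolding M_def by auto
      qed
      have sub: "M y' \<subseteq> M y"
      proof
        fix w assume w: "w \<in> M y'"
        show "w \<in> M y"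
        proof (rule ccontr)
          assume "w \<notin> M y"
          then have rw: "(r,w) \<in> (A \<inter> ((V-{a,y}) \<times> (V-{a,y})))\<^sup>*" using w unfolding M_def by auto
          from PL[OF rw, of y'] show False
          proof
            assume "(r,w) \<in> (A \<inter> ((V-{a,y}-{y'}) \<times> (V-{a,y}-{y'})))\<^sup>*"
            then have "(r,w) \<in> (A \<inter> ((V-{a,y'}) \<times> (V-{a,y'})))\<^sup>*"
              by (rule rt_mono[rotated]) auto
            then show False using w unfolding M_def by auto
          next
            assume "(r,y') \<in> (A \<inter> ((V-{a,y}) \<times> (V-{a,y})))\<^sup>*"
            then show False using y'My unfolding M_def by auto
          qed
        qed
      qed
      have yMy: "y \<in> M y"
      proof -
        have "(r,y) \<notin> (A \<inter> ((V-{a,y}) \<times> (V-{a,y})))\<^sup>*"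
          using rt_mem[of r y A "V-{a,y}"] yr by auto
        then show ?thesis using yV unfolding M_def by auto
      qed
      have ynMy': "y \<notin> M y'"
      proof -
        have eq2: "V-{a}-{y'} = V-{a,y'}" by auto
        have "(r,y) \<in> (A \<inter> ((V-{a}) \<times> (V-{a})))\<^sup>*" using reach1[of a y] aV ar yV ya by auto
        moreover have "r \<noteq> y'" using ay'(1) noin by auto
        ultimately have "(r,y) \<in> (A \<inter> ((V-{a}-{y'}) \<times> (V-{a}-{y'})))\<^sup>* \<or> (\<exists>p. (r,p) \<in> (A \<inter> ((V-{a}-{y'}) \<times> (V-{a}-{y'})))\<^sup>* \<and> (p,y') \<in> A)"
          by (rule PL2)
        then
        have "(r,y) \<in> (A \<inter> ((V-{a,y'}) \<times> (V-{a,y'})))\<^sup>*"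
        proof (elim disjE exE conjE)
          assume "(r,y) \<in> (A \<inter> ((V-{a}-{y'}) \<times> (V-{a}-{y'})))\<^sup>*"
          then show ?thesis using eq2 by simp
        next
          fix p assume rp: "(r,p) \<in> (A \<inter> ((V-{a}-{y'}) \<times> (V-{a}-{y'})))\<^sup>*" and py': "(p,y') \<in> A"
          from PL[OF rp, of y] show ?thesis
          proof
            assume rp2: "(r,p) \<in> (A \<inter> ((V-{a}-{y'}-{y}) \<times> (V-{a}-{y'}-{y})))\<^sup>*"
            then have rp3: "(r,p) \<in> (A \<inter> ((V-{a,y}) \<times> (V-{a,y})))\<^sup>*"
              by (rule rt_mono[rotated]) auto
            have "p \<in> V-{a,y}" using rt_mem[OF rp2] rV ar yr by auto
            then have "(p,y') \<in> A \<inter> ((V-{a,y}) \<times> (V-{a,y}))" using py' ay'(2) by auto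
            then have "(r,y') \<in> (A \<inter> ((V-{a,y}) \<times> (V-{a,y})))\<^sup>*"
              using rp3 by (meson rtrancl.rtrancl_into_rtrancl)
            then show ?thesis using y'My unfolding M_def by auto
          next
            assume "(r,y) \<in> (A \<inter> ((V-{a}-{y'}) \<times> (V-{a}-{y'})))\<^sup>*"
            then show ?thesis using eq2 by simp
          qed
        qed
        then show ?thesis unfolding M_def by auto
      qed
      have "M y' \<subset> M y" using sub yMy ynMy' by auto
      moreover have "finite (M y)" using finV unfolding M_def by auto
      ultimately have "card (M y') < card (M y)" by (rule psubset_card_mono[rotated])
      with ymin[OF ay'(1)] show False by simp
    qed
    define V' where "V' = V - {y}"
    define A' where "A' = {(u,v). (u,v) \<in> A \<and> u \<noteq> y \<and> v \<noteq> y} \<union> {(a,z) | z. (y,z) \<in> A}"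
    have outeq: "out_nbrs A' r = out_nbrs A r"
      using ar yR yr unfolding out_nbrs_def A'_def by auto
    have rd': "rooted_digraph V' A' r"
    proof -
      have "A' \<subseteq> V' \<times> V'" using AV aV ya noloop unfolding A'_def V'_def by auto
      moreover have "\<And>x. (x,x) \<notin> A'" using noloop noR[OF yr aR] unfolding A'_def by auto
      moreover have "\<And>u. (u,r) \<notin> A'" using noin unfolding A'_def by auto
      moreover have "\<And>x v. x \<noteq> r \<Longrightarrow> v \<in> out_nbrs A' r \<Longrightarrow> (x,v) \<notin> A'"
        using noR yr unfolding outeq unfolding A'_def by auto
      ultimately show ?thesis using finV rV yr cR outeq unfolding rooted_digraph_def V'_def by auto
    qed
    have transfer: "(r, if z = y then a else z) \<in> (A' \<inter> ((W-{y}) \<times> (W-{y})))\<^sup>*"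
      if rz: "(r,z) \<in> (A \<inter> (W \<times> W))\<^sup>*" and aW: "a \<in> W" and rW: "r \<in> W" for W z
      using rz
    proof (induct rule: rtrancl_induct)
      case base then show ?case using yr by simp
    next
      case (step w z')
      have raX: "(r,a) \<in> (A' \<inter> ((W-{y}) \<times> (W-{y})))\<^sup>*"
        using ra aW rW ya yr unfolding A'_def by auto
      show ?case
      proof (cases "z' = y")
        case True then show ?thesis using raX by simp
      next
        case False
        have "((if w = y then a else w), z') \<in> A' \<inter> ((W-{y}) \<times> (W-{y}))"
          using step(2) False aW ya unfolding A'_def by auto
        then show ?thesis using step(3) False by (simp add: rtrancl.rtrancl_into_rtrancl)
      qed
    qed
    have tc': "two_connected V' A' r"
      unfolding two_connected_def is_cut_def
    proof (intro allI impI notI)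
      fix S assume cS: "card S \<le> 1 \<and> finite S"
        and cut: "S \<subseteq> V' - {r} \<and> (\<exists>z\<in>V' - S. (r, z) \<notin> (A' \<inter> ((V' - S) \<times> (V' - S)))\<^sup>*)"
      then obtain z where z: "z \<in> V' - S" and nz: "(r, z) \<notin> (A' \<inter> ((V' - S) \<times> (V' - S)))\<^sup>*"
        and SV: "S \<subseteq> V' - {r}" by blast
      from card_le1 cS consider "S = {}" | s where "S = {s}" by blast
      then show False
      proof cases
        case 1
        have "(r,z) \<in> (A \<inter> (V \<times> V))\<^sup>*" using reach0 z unfolding V'_def by auto
        from transfer[OF this aV rV] show False using nz z 1 unfolding V'_def by auto
      next
        case (2 s)
        show False
        proof (cases "s = a")
          case True
          have "(r,z) \<in> (A \<inter> ((V-{a,y}) \<times> (V-{a,y})))\<^sup>*" using C z 2 True unfolding V'_def by auto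
          then have "(r,z) \<in> (A' \<inter> ((V'-S) \<times> (V'-S)))\<^sup>*"
            by (rule rtrancl_mono[THEN subsetD, rotated]) (auto simp: A'_def V'_def 2 True)
          then show False using nz by simp
        next
          case False
          have sV: "s \<in> V" "s \<noteq> r" using SV 2 unfolding V'_def by auto
          have "(r,z) \<in> (A \<inter> ((V-{s}) \<times> (V-{s})))\<^sup>*" using reach1[OF sV] z 2 unfolding V'_def by auto
          from transfer[OF this] False aV rV sV have "(r, z) \<in> (A' \<inter> ((V-{s}-{y}) \<times> (V-{s}-{y})))\<^sup>*"
            using z unfolding V'_def by auto
          moreover have "V-{s}-{y} = V' - S" unfolding V'_def 2 by auto
          ultimately show False using nz by simp
        qed
      qed
    qed
    have cV: "card V' < card V" unfolding V'_def by (rule card_Diff1_less[OF finV yV])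
    from less.hyps[OF cV rd' tc'] obtain \<sigma>' where s': "rr_numbering V' A' r \<sigma>'" by blast
    obtain u where uy: "(u,y) \<in> A" and ua: "u \<noteq> a" and uV: "u \<in> V" and ur: "u \<noteq> r" and uy': "u \<noteq> y"
    proof -
      have "(r,y) \<in> (A \<inter> ((V-{a}) \<times> (V-{a})))\<^sup>*" using reach1[of a y] aV ar yV ya by auto
      from this yr obtain p where p: "(p,y) \<in> A \<inter> ((V-{a}) \<times> (V-{a}))" by (blast elim: rtranclE)
      moreover have "p \<noteq> r" using p yR unfolding out_nbrs_def by auto
      moreover have "p \<noteq> y" using p noloop by auto
      ultimately show ?thesis using that by auto
    qed
    from s' have inj': "inj_on \<sigma>' (V'-{r})" and cond': "\<And>x. x \<in> V'-{r} \<Longrightarrow> x \<in> out_nbrs A' r \<or>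
        (\<exists>u\<in>V'-{r}. \<exists>v\<in>V'-{r}. u \<in> in_nbrs A' x \<and> v \<in> in_nbrs A' x \<and> \<sigma>' u < \<sigma>' x \<and> \<sigma>' x < \<sigma>' v)"
      unfolding rr_numbering_def by auto
    define \<sigma> where "\<sigma> = (\<lambda>z. if z = y then (if \<sigma>' a < \<sigma>' u then 2*\<sigma>' a + 2 else 2*\<sigma>' a) else 2*\<sigma>' z + 1)"
    have aV': "a \<in> V'-{r}" and uV': "u \<in> V'-{r}" using aV ar ya uV ur uy' unfolding V'_def by auto
    have sau: "\<sigma>' a \<noteq> \<sigma>' u" using inj' aV' uV' ua unfolding inj_on_def by metis
    have inj: "inj_on \<sigma> (V-{r})"
    proof (rule inj_onI)
      fix p q assume p: "p \<in> V-{r}" and q: "q \<in> V-{r}" and e: "\<sigma> p = \<sigma> q"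
      show "p = q"
      proof (cases "p = y \<or> q = y")
        case True
        then show ?thesis using e by (auto simp: \<sigma>_def split: if_splits; presburger)
      next
        case False
        then have "\<sigma>' p = \<sigma>' q" using e unfolding \<sigma>_def by auto
        moreover have "p \<in> V'-{r}" "q \<in> V'-{r}" using p q False unfolding V'_def by auto
        ultimately show ?thesis using inj' by (meson inj_onD)
      qed
    qed
    have lift: "\<exists>p0 \<in> V-{r}. p0 \<in> in_nbrs A x \<and> (\<sigma>' p < \<sigma>' x \<longrightarrow> \<sigma> p0 < \<sigma> x) \<and> (\<sigma>' x < \<sigma>' p \<longrightarrow> \<sigma> x < \<sigma> p0)"
      if p: "p \<in> V'-{r}" "p \<in> in_nbrs A' x" and x: "x \<in> V'-{r}" for p x
    proof -
      have sx: "\<sigma> x = 2*\<sigma>' x + 1" using x unfolding \<sigma>_def V'_def by auto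
      from p(2) consider "(p,x) \<in> A" "p \<noteq> y" | "p = a" "(y,x) \<in> A" unfolding in_nbrs_def A'_def by auto
      then show ?thesis
      proof cases
        case 1
        have "\<sigma> p = 2*\<sigma>' p + 1" using 1 unfolding \<sigma>_def by auto
        then show ?thesis using 1 p(1) sx unfolding in_nbrs_def V'_def by (intro bexI[of _ p]) auto
      next
        case 2
        have "y \<in> V-{r}" using yV yr by auto
        moreover have "y \<in> in_nbrs A x" using 2 unfolding in_nbrs_def by auto
        moreover have "(\<sigma>' p < \<sigma>' x \<longrightarrow> \<sigma> y < \<sigma> x) \<and> (\<sigma>' x < \<sigma>' p \<longrightarrow> \<sigma> x < \<sigma> y)"
          using 2 sx unfolding \<sigma>_def by (auto split: if_splits)
        ultimately show ?thesis by blast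
      qed
    qed
    have "rr_numbering V A r \<sigma>"
      unfolding rr_numbering_def
    proof (intro conjI ballI inj)
      fix x assume x: "x \<in> V - {r}"
      show "x \<in> out_nbrs A r \<or> (\<exists>u\<in>V - {r}. \<exists>v\<in>V - {r}. u \<in> in_nbrs A x \<and> v \<in> in_nbrs A x \<and> \<sigma> u < \<sigma> x \<and> \<sigma> x < \<sigma> v)"
      proof (cases "x = y")
        case True
        have ain: "a \<in> in_nbrs A y" "u \<in> in_nbrs A y" using ay uy unfolding in_nbrs_def by auto
        have sa: "\<sigma> a = 2*\<sigma>' a + 1" "\<sigma> u = 2*\<sigma>' u + 1" using ya uy' unfolding \<sigma>_def by auto
        have aVr: "a \<in> V-{r}" "u \<in> V-{r}" using aV ar uV ur by auto
        consider "\<sigma>' a < \<sigma>' u" | "\<sigma>' u < \<sigma>' a" using sau by linarith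
        then show ?thesis
        proof cases
          case 1
          then have "\<sigma> a < \<sigma> y \<and> \<sigma> y < \<sigma> u" using sa unfolding \<sigma>_def by auto
          then show ?thesis using True ain aVr by blast
        next
          case 2
          then have "\<sigma> u < \<sigma> y \<and> \<sigma> y < \<sigma> a" using sa unfolding \<sigma>_def by auto
          then show ?thesis using True ain aVr by blast
        qed
      next
        case False
        then have xV': "x \<in> V'-{r}" using x V'_def by auto
        from cond'[OF xV'] show ?thesis
        proof
          assume "x \<in> out_nbrs A' r" then show ?thesis using outeq by simp
        next
          assume "\<exists>u\<in>V'-{r}. \<exists>v\<in>V'-{r}. u \<in> in_nbrs A' x \<and> v \<in> in_nbrs A' x \<and> \<sigma>' u < \<sigma>' x \<and> \<sigma>' x < \<sigma>' v"
          then obtain u1 v1 where u1: "u1 \<in> V'-{r}" "u1 \<in> in_nbrs A' x" and v1: "v1 \<in> V'-{r}" "v1 \<in> in_nbrs A' x"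
            and lt: "\<sigma>' u1 < \<sigma>' x" "\<sigma>' x < \<sigma>' v1" by blast
          from lift[OF u1 xV'] lt(1) obtain p0 where "p0 \<in> V-{r}" "p0 \<in> in_nbrs A x" "\<sigma> p0 < \<sigma> x" by blast
          moreover from lift[OF v1 xV'] lt(2) obtain q0 where "q0 \<in> V-{r}" "q0 \<in> in_nbrs A x" "\<sigma> x < \<sigma> q0" by blast
          ultimately show ?thesis by blast
        qed
      qed
    qed
    then show ?thesis by blast
  qed
qed

end
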